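(* In the standing setup, let $T$ be a valid partial table and let $(i,b)$ be a position with $T(i,b)=\emptyset$. Then either there exists $x\in B_{i,b}$ such that both $S_i+x$ and $C_b+x$ are independent, or there are at least $n-|C_b|$ columns $c$ that are $(i,b)$-swappable.
   Context: Standing setup: $M$ is a matroid of rank $n$ on ground set $E$; $f\le n$ is a positive integer; for each $i\in\{1,\dots,f\}$ and $j\in\{1,\dots,n\}$, $B_{i,j}$ is a basis of $M$, and the sets $B_{i,j}$ are pairwise disjoint. A valid partial table $T$ assigns to each position $(i,j)\in[f]\times[n]$ either the symbol $\emptyset$ (the position is empty) or an element $T(i,j)\in B_{i,j}$, such that for every row $i$ the set $S_i=\{T(i,j):T(i,j)\ne\emptyset\}$ is independent and for every column $j$ the set $C_j=\{T(i,j):T(i,j)\neq\emptyset\}$ is independent. Notation: for a set $A$ and an element $z$, "$A+z$ is independent" means $z\notin A$ and $A\cup\{z\}$ is independent; $A-z$ denotes $A\setminus\{z\}$ for $z\in A$; expressions such as $A-z+w$ are read left to right with the same convention. Definition: given $T(i,b)=\emptyset$, a column $c$ with $T(i,c)=x'\neq\emptyset$ is $(i,b)$-swappable if there is $y\in B_{i,b}$ such that $C_b+y$ and $S_i-x'+y$ are independent; such $y$ is called a witness for the $(i,b)$-swappability of $c$. *)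

theory Defs
  imports Main
begin

definition matroid :: "'a set \<Rightarrow> ('a set \<Rightarrow> bool) \<Rightarrow> bool" where
  "matroid E indep \<longleftrightarrow>
     finite E \<and> indep {} \<and>
     (\<forall>X. indep X \<longrightarrow> X \<subseteq> E) \<and>
     (\<forall>X Y. indep X \<and> Y \<subseteq> X \<longrightarrow> indep Y) \<and>
     (\<forall>X Y. indep X \<and> indep Y \<and> card X < card Y \<longrightarrow>
        (\<exists>y \<in> Y - X. indep (insert y X)))"

definition basis :: "'a set \<Rightarrow> ('a set \<Rightarrow> bool) \<Rightarrow> 'a set \<Rightarrow> bool" where
  "basis E indep B \<longleftrightarrow> B \<subseteq> E \<and> indep B \<and> (\<forall>x \<in> E - B. \<not> indep (insert x B))"

definition matroid_rank :: "'a set \<Rightarrow> ('a set \<Rightarrow> bool) \<Rightarrow> nat" where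
  "matroid_rank E indep = Max (card ` {X. X \<subseteq> E \<and> indep X})"

text \<open>A partial table: positions (i,j) with i in 1..f, j in 1..n; None = empty position.\<close>
definition row_set :: "nat \<Rightarrow> (nat \<Rightarrow> nat \<Rightarrow> 'a option) \<Rightarrow> nat \<Rightarrow> 'a set" where
  "row_set n T i = {x. \<exists>j \<in> {1..n}. T i j = Some x}"

definition col_set :: "nat \<Rightarrow> (nat \<Rightarrow> nat \<Rightarrow> 'a option) \<Rightarrow> nat \<Rightarrow> 'a set" where
  "col_set f T j = {x. \<exists>i \<in> {1..f}. T i j = Some x}"

definition valid_partial_table ::
  "('a set \<Rightarrow> bool) \<Rightarrow> nat \<Rightarrow> nat \<Rightarrow> (nat \<Rightarrow> nat \<Rightarrow> 'a set) \<Rightarrow> (nat \<Rightarrow> nat \<Rightarrow> 'a option) \<Rightarrow> bool" where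
  "valid_partial_table indep f n B T \<longleftrightarrow>
     (\<forall>i \<in> {1..f}. \<forall>j \<in> {1..n}. \<forall>x. T i j = Some x \<longrightarrow> x \<in> B i j) \<and>
     (\<forall>i \<in> {1..f}. indep (row_set n T i)) \<and>
     (\<forall>j \<in> {1..n}. indep (col_set f T j))"

definition plus_indep :: "('a set \<Rightarrow> bool) \<Rightarrow> 'a set \<Rightarrow> 'a \<Rightarrow> bool" where
  "plus_indep indep A z \<longleftrightarrow> z \<notin> A \<and> indep (insert z A)"

text \<open>Column c is (i,b)-swappable (assuming T(i,b) is empty).\<close>
definition swap_witness ::
  "('a set \<Rightarrow> bool) \<Rightarrow> nat \<Rightarrow> nat \<Rightarrow> (nat \<Rightarrow> nat \<Rightarrow> 'a set) \<Rightarrow> (nat \<Rightarrow> nat \<Rightarrow> 'a option)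
    \<Rightarrow> nat \<Rightarrow> nat \<Rightarrow> nat \<Rightarrow> 'a \<Rightarrow> bool" where
  "swap_witness indep f n B T i b c y \<longleftrightarrow>
     (\<exists>x'. T i c = Some x' \<and> y \<in> B i b \<and>
        plus_indep indep (col_set f T b) y \<and>
        plus_indep indep (row_set n T i - {x'}) y)"

definition swappable ::
  "('a set \<Rightarrow> bool) \<Rightarrow> nat \<Rightarrow> nat \<Rightarrow> (nat \<Rightarrow> nat \<Rightarrow> 'a set) \<Rightarrow> (nat \<Rightarrow> nat \<Rightarrow> 'a option)
    \<Rightarrow> nat \<Rightarrow> nat \<Rightarrow> nat \<Rightarrow> bool" where
  "swappable indep f n B T i b c \<longleftrightarrow>
     c \<in> {1..n} \<and> T i c \<noteq> None \<and> (\<exists>y. swap_witness indep f n B T i b c y)"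

end

theory Submission
  imports Defs
begin

lemma m_fin: "matroid E indep \<Longrightarrow> indep X \<Longrightarrow> finite X"
  unfolding matroid_def by (meson finite_subset)

lemma m_sub: "matroid E indep \<Longrightarrow> indep X \<Longrightarrow> Y \<subseteq> X \<Longrightarrow> indep Y"
  unfolding matroid_def by blast

lemma m_aug: "matroid E indep \<Longrightarrow> indep X \<Longrightarrow> indep Y \<Longrightarrow> card X < card Y
   \<Longrightarrow> \<exists>y \<in> Y - X. indep (insert y X)"
  unfolding matroid_def by blast

lemma m_extend:
  assumes m: "matroid E indep" and K: "indep K"
  shows "indep J \<Longrightarrow> \<exists>I. J \<subseteq> I \<and> I \<subseteq> J \<union> K \<and> indep I \<and> card K \<le> card I"
proof (induction "card K - card J" arbitrary: J rule: less_induct)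
  case (less J)
  show ?case
  proof (cases "card K \<le> card J")
    case True thus ?thesis using less.prems by blast
  next
    case False
    then obtain y where y: "y \<in> K - J" "indep (insert y J)"
      using m_aug[OF m less.prems K] by auto
    have fJ: "finite J" using m_fin[OF m less.prems] .
    have "card (insert y J) = card J + 1" using y fJ by simp
    hence "card K - card (insert y J) < card K - card J" using False by simp
    from less.hyps[OF this y(2)] obtain I where
      "insert y J \<subseteq> I" "I \<subseteq> insert y J \<union> K" "indep I" "card K \<le> card I" by blast
    thus ?thesis using y by blast
  qed
qed

lemma basis_card:
  assumes m: "matroid E indep" and r: "matroid_rank E indep = n" and bB: "basis E indep B'"
  shows "n \<le> card B'"
proof (rule ccontr)
  assume a: "\<not> n \<le> card B'"
  let ?A = "card ` {X. X \<subseteq> E \<and> indep X}"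
  have fE: "finite E" using m unfolding matroid_def by blast
  have fin: "finite ?A" using fE by simp
  have ne: "?A \<noteq> {}" using m unfolding matroid_def by blast
  have "n \<in> ?A" using Max_in[OF fin ne] r unfolding matroid_rank_def by simp
  then obtain X where X: "X \<subseteq> E" "indep X" "card X = n" by blast
  have iB: "indep B'" using bB unfolding basis_def by blast
  obtain y where y: "y \<in> X - B'" "indep (insert y B')" using m_aug[OF m iB X(2)] a X(3) by auto
  thus False using bB X(1) unfolding basis_def by blast
qed

theorem mainTheorem3:
  fixes E :: "'a set" and indep :: "'a set \<Rightarrow> bool"
    and f n :: nat and B :: "nat \<Rightarrow> nat \<Rightarrow> 'a set" and T :: "nat \<Rightarrow> nat \<Rightarrow> 'a option"
    and i b :: nat
  assumes "matroid E indep"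
    and "matroid_rank E indep = n"
    and "0 < f" and "f \<le> n"
    and "\<forall>i \<in> {1..f}. \<forall>j \<in> {1..n}. basis E indep (B i j)"
    and "\<forall>i \<in> {1..f}. \<forall>j \<in> {1..n}. \<forall>i' \<in> {1..f}. \<forall>j' \<in> {1..n}.
           (i, j) \<noteq> (i', j') \<longrightarrow> B i j \<inter> B i' j' = {}"
    and "valid_partial_table indep f n B T"
    and "i \<in> {1..f}" and "b \<in> {1..n}"
    and "T i b = None"
  shows "(\<exists>x \<in> B i b. plus_indep indep (row_set n T i) x \<and> plus_indep indep (col_set f T b) x)
         \<or> n - card (col_set f T b) \<le> card {c. swappable indep f n B T i b c}"
proof (cases "\<exists>x \<in> B i b. plus_indep indep (row_set n T i) x \<and> plus_indep indep (col_set f T b) x")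
  case True thus ?thesis by blast
next
  case False
  note m = assms(1)
  define S where "S = row_set n T i"
  define C where "C = col_set f T b"
  note neg = False
  have iS: "indep S" using assms(7,8) unfolding valid_partial_table_def S_def by blast
  have iC: "indep C" using assms(7,9) unfolding valid_partial_table_def C_def by blast
  have bas: "basis E indep (B i b)" using assms(5,8,9) by blast
  have iBb: "indep (B i b)" using bas unfolding basis_def by blast
  have nB: "n \<le> card (B i b)" using basis_card[OF m assms(2) bas] .
  have yS: "y \<notin> S" if "y \<in> B i b" for y
  proof
    assume "y \<in> S"
    then obtain j where j: "j \<in> {1..n}" "T i j = Some y" unfolding S_def row_set_def by blast
    have "j \<noteq> b" using j assms(10) by auto
    have "y \<in> B i j" using assms(7,8) j unfolding valid_partial_table_def by blast
    thus False using assms(6,8,9) j(1) \<open>j \<noteq> b\<close> that by blast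
  qed
  obtain I where I: "C \<subseteq> I" "I \<subseteq> C \<union> B i b" "indep I" "card (B i b) \<le> card I"
    using m_extend[OF m iBb iC] by blast
  define Y where "Y = I - C"
  have fI: "finite I" using m_fin[OF m I(3)] .
  have fC: "finite C" using m_fin[OF m iC] .
  have fS: "finite S" using m_fin[OF m iS] .
  have "card I \<le> card C + card Y" unfolding Y_def
    by (metis Diff_partition I(1) card_Un_le fI finite_subset)
  hence cY: "n - card C \<le> card Y" using nB I(4) by linarith
  have YB: "Y \<subseteq> B i b" using I(2) Y_def by blast
  have iY: "indep Y" using m_sub[OF m I(3)] Y_def by blast
  have Ycol: "plus_indep indep C y" if "y \<in> Y" for y
    using that m_sub[OF m I(3), of "insert y C"] I(1) unfolding Y_def plus_indep_def by blast
  have Ydep: "\<not> indep (insert y S)" if "y \<in> Y" for y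
    using neg Ycol[OF that] YB that yS unfolding plus_indep_def S_def C_def by blast
  define X where "X = {x \<in> S. \<exists>y \<in> Y. indep (insert y (S - {x}))}"
  have XS: "X \<subseteq> S" unfolding X_def by blast
  have iX: "indep X" using m_sub[OF m iS XS] .
  have cXY: "card Y \<le> card X"
  proof (rule ccontr)
    assume "\<not> card Y \<le> card X"
    then obtain y where y: "y \<in> Y - X" "indep (insert y X)" using m_aug[OF m iX iY] by auto
    obtain J where J: "insert y X \<subseteq> J" "J \<subseteq> insert y X \<union> S" "indep J" "card S \<le> card J"
      using m_extend[OF m iS y(2)] by blast
    have "\<not> S \<subseteq> J"
    proof
      assume "S \<subseteq> J"
      hence "insert y S \<subseteq> J" using J(1) by blast
      thus False using m_sub[OF m J(3)] Ydep y(1) by blast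
    qed
    then obtain x where x: "x \<in> S" "x \<notin> J" by blast
    have sub: "J \<subseteq> insert y (S - {x})" using J(2) XS x by blast
    have fin2: "finite (insert y (S - {x}))" using fS by simp
    have "card (insert y (S - {x})) \<le> card S"
      using fS x(1) yS YB y(1) card_gt_0_iff[of S] by (auto simp add: card_insert_if)
    hence "J = insert y (S - {x})"
      using card_seteq[OF fin2 sub] J(4) by linarith
    hence "x \<in> X" unfolding X_def using x(1) J(3) y(1) by blast
    thus False using x(2) J(1) by blast
  qed
  define g where "g x = (SOME c. c \<in> {1..n} \<and> T i c = Some x)" for x
  have g: "g x \<in> {1..n} \<and> T i (g x) = Some x" if "x \<in> S" for x
  proof -
    have "\<exists>c. c \<in> {1..n} \<and> T i c = Some x" using that unfolding S_def row_set_def by blast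
    thus ?thesis unfolding g_def by (rule someI_ex)
  qed
  have inj: "inj_on g X"
    by (rule inj_onI) (metis XS g option.inject subsetD)
  have img: "g ` X \<subseteq> {c. swappable indep f n B T i b c}"
  proof
    fix c assume "c \<in> g ` X"
    then obtain x where x: "x \<in> X" "c = g x" by blast
    then obtain y where y: "y \<in> Y" "indep (insert y (S - {x}))" unfolding X_def by blast
    have xS: "x \<in> S" using x XS by blast
    have "swap_witness indep f n B T i b c y"
      unfolding swap_witness_def
      using g[OF xS] x(2) y YB Ycol[OF y(1)] yS[of y] unfolding plus_indep_def S_def C_def by blast
    thus "c \<in> {c. swappable indep f n B T i b c}"
      unfolding swappable_def using g[OF xS] x(2) by blast
  qed
  have fin: "finite {c. swappable indep f n B T i b c}"
    by (rule finite_subset[of _ "{1..n}"]) (auto simp: swappable_def)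
  have "card X \<le> card {c. swappable indep f n B T i b c}"
    using card_inj_on_le[OF inj img fin] .
  hence "n - card (col_set f T b) \<le> card {c. swappable indep f n B T i b c}"
    using cY cXY unfolding C_def by linarith
  thus ?thesis by blast
qed

end
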